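(* Let $\mathcal{H}$ be a complex infinite-dimensional Hilbert space, let $n>1$ be an integer, and let $A\in B(\mathcal{H})$ be $n$-normal, i.e. $A^*A^n=A^nA^*$ (equivalently, $A^n$ is a normal operator). Then $A$ is polaroid.
   Context: $B(\mathcal{H})$ denotes the algebra of bounded linear operators on $\mathcal{H}$. For $S\in B(\mathcal{H})$ and $\lambda\in\mathbb{C}$, the ascent $\mathrm{asc}(S-\lambda)$ is the least nonnegative integer $p$ with $(S-\lambda)^{-p}(0)=(S-\lambda)^{-(p+1)}(0)$, and the descent $\mathrm{dsc}(S-\lambda)$ is the least nonnegative integer $p$ with $(S-\lambda)^p(\mathcal{H})=(S-\lambda)^{p+1}(\mathcal{H})$. A point $\lambda$ that is isolated in $\sigma(S)$ is a pole (of the resolvent) of $S$ if $0<\mathrm{asc}(S-\lambda)=\mathrm{dsc}(S-\lambda)<\infty$. $S$ is polaroid if every isolated point of $\sigma(S)$ is a pole of $S$. *)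

theory Defs
  imports "HOL-Analysis.Analysis"
begin

class scaleC =
  fixes scaleC :: "complex \<Rightarrow> 'a \<Rightarrow> 'a"  (infixr \<open>*\<^sub>C\<close> 75)

class complex_inner_space = real_normed_vector + scaleC +
  fixes cinner :: "'a \<Rightarrow> 'a \<Rightarrow> complex"
  assumes scaleC_add_right: "a *\<^sub>C (x + y) = a *\<^sub>C x + a *\<^sub>C y"
    and scaleC_add_left: "(a + b) *\<^sub>C x = a *\<^sub>C x + b *\<^sub>C x"
    and scaleC_scaleC: "a *\<^sub>C (b *\<^sub>C x) = (a * b) *\<^sub>C x"
    and scaleC_one: "1 *\<^sub>C x = x"
    and scaleR_scaleC: "scaleR r x = complex_of_real r *\<^sub>C x"
    and cinner_commute: "cinner x y = cnj (cinner y x)"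
    and cinner_add_left: "cinner (x + y) z = cinner x z + cinner y z"
    and cinner_scaleC_left: "cinner (a *\<^sub>C x) y = cnj a * cinner x y"
    and cinner_self_real: "Im (cinner x x) = 0"
    and cinner_self_nonneg: "0 \<le> Re (cinner x x)"
    and cinner_self_eq_zero: "cinner x x = 0 \<longleftrightarrow> x = 0"
    and norm_eq_sqrt_cinner: "norm x = sqrt (Re (cinner x x))"

class complex_hilbert_space = complex_inner_space + complete_space

definition infinite_dimensional :: "'a::complex_inner_space itself \<Rightarrow> bool" where
  "infinite_dimensional (_::'a itself) \<longleftrightarrow>
     \<not> (\<exists>S::'a set. finite S \<and> (\<forall>x. \<exists>c. x = (\<Sum>s\<in>S. c s *\<^sub>C s)))"

definition bounded_clinear :: "('a::complex_inner_space \<Rightarrow> 'b::complex_inner_space) \<Rightarrow> bool" where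
  "bounded_clinear T \<longleftrightarrow>
     (\<forall>x y. T (x + y) = T x + T y) \<and> (\<forall>a x. T (a *\<^sub>C x) = a *\<^sub>C T x) \<and>
     (\<exists>K. \<forall>x. norm (T x) \<le> norm x * K)"

definition shiftop :: "('a::complex_inner_space \<Rightarrow> 'a) \<Rightarrow> complex \<Rightarrow> 'a \<Rightarrow> 'a" where
  "shiftop S mu = (\<lambda>x. S x - mu *\<^sub>C x)"

definition spectrum :: "('a::complex_inner_space \<Rightarrow> 'a) \<Rightarrow> complex set" where
  "spectrum S = {mu. \<not> (\<exists>B. bounded_clinear B \<and> (\<forall>x. B (shiftop S mu x) = x)
                                           \<and> (\<forall>x. shiftop S mu (B x) = x))}"

definition ascent :: "('a::complex_inner_space \<Rightarrow> 'a) \<Rightarrow> enat" where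
  "ascent T = (if \<exists>p. {x. (T ^^ p) x = 0} = {x. (T ^^ Suc p) x = 0}
               then enat (LEAST p. {x. (T ^^ p) x = 0} = {x. (T ^^ Suc p) x = 0})
               else \<infinity>)"

definition descent :: "('a::complex_inner_space \<Rightarrow> 'a) \<Rightarrow> enat" where
  "descent T = (if \<exists>p. range (T ^^ p) = range (T ^^ Suc p)
               then enat (LEAST p. range (T ^^ p) = range (T ^^ Suc p))
               else \<infinity>)"

definition is_pole :: "('a::complex_inner_space \<Rightarrow> 'a) \<Rightarrow> complex \<Rightarrow> bool" where
  "is_pole S mu \<longleftrightarrow> mu isolated_in spectrum S \<and>
     0 < ascent (shiftop S mu) \<and> ascent (shiftop S mu) = descent (shiftop S mu) \<and>
     ascent (shiftop S mu) < \<infinity>"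

definition polaroid :: "('a::complex_inner_space \<Rightarrow> 'a) \<Rightarrow> bool" where
  "polaroid S \<longleftrightarrow> (\<forall>mu. mu isolated_in spectrum S \<longrightarrow> is_pole S mu)"

end

theory Submission
  imports Defs "HOL-Complex_Analysis.Complex_Analysis"
begin

subclass (in complex_hilbert_space) banach ..


lemma scaleC_zero_left [simp]: "0 *\<^sub>C (x::'a::complex_inner_space) = 0"
proof -
  have "(0 + 0) *\<^sub>C (x::'a::complex_inner_space) = 0 *\<^sub>C x + 0 *\<^sub>C x" by (rule scaleC_add_left)
  then show ?thesis by simp
qed

lemma scaleC_zero_right [simp]: "a *\<^sub>C (0::'a::complex_inner_space) = 0"
proof -
  have "a *\<^sub>C ((0::'a::complex_inner_space) + 0) = a *\<^sub>C 0 + a *\<^sub>C 0" by (rule scaleC_add_right)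
  then show ?thesis by simp
qed

lemma scaleC_minus_left: "(- a) *\<^sub>C (x::'a::complex_inner_space) = - (a *\<^sub>C x)"
proof -
  have "(a + - a) *\<^sub>C (x::'a::complex_inner_space) = a *\<^sub>C x + (- a) *\<^sub>C x" by (rule scaleC_add_left)
  then have "a *\<^sub>C x + (- a) *\<^sub>C x = 0" by simp
  then show ?thesis by (auto simp: add_eq_0_iff)
qed

lemma scaleC_minus_right: "a *\<^sub>C (- (x::'a::complex_inner_space)) = - (a *\<^sub>C x)"
proof -
  have "a *\<^sub>C ((x::'a::complex_inner_space) + - x) = a *\<^sub>C x + a *\<^sub>C (- x)" by (rule scaleC_add_right)
  then have "a *\<^sub>C x + a *\<^sub>C (- x) = 0" by simp
  then show ?thesis by (auto simp: add_eq_0_iff)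
qed

lemma scaleC_diff_left: "(a - b) *\<^sub>C (x::'a::complex_inner_space) = a *\<^sub>C x - b *\<^sub>C x"
  using scaleC_add_left[of a "-b" x] by (simp add: scaleC_minus_left)

lemma scaleC_diff_right: "a *\<^sub>C ((x::'a::complex_inner_space) - y) = a *\<^sub>C x - a *\<^sub>C y"
  using scaleC_add_right[of a x "-y"] by (simp add: scaleC_minus_right)

lemma scaleC_one' [simp]: "1 *\<^sub>C (x::'a::complex_inner_space) = x" by (rule scaleC_one)

lemma scaleC_scaleC' [simp]: "a *\<^sub>C (b *\<^sub>C (x::'a::complex_inner_space)) = (a * b) *\<^sub>C x" by (rule scaleC_scaleC)

lemma cinner_zero_left [simp]: "cinner 0 (y::'a::complex_inner_space) = 0"
  using cinner_add_left[of 0 0 y] by simp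

lemma cinner_add_right: "cinner (x::'a::complex_inner_space) (y + z) = cinner x y + cinner x z"
  by (metis cinner_add_left cinner_commute complex_cnj_add)

lemma cinner_zero_right [simp]: "cinner (x::'a::complex_inner_space) 0 = 0"
  using cinner_add_right[of x 0 0] by simp

lemma cinner_scaleC_right: "cinner (x::'a::complex_inner_space) (a *\<^sub>C y) = a * cinner x y"
  by (metis cinner_commute cinner_scaleC_left complex_cnj_cnj complex_cnj_mult)

lemma cinner_minus_left: "cinner (- (x::'a::complex_inner_space)) y = - cinner x y"
  using cinner_add_left[of x "-x" y] by (auto simp: add_eq_0_iff)

lemma cinner_minus_right: "cinner (x::'a::complex_inner_space) (- y) = - cinner x y"
  using cinner_add_right[of x y "-y"] by (auto simp: add_eq_0_iff)

lemma cinner_diff_left: "cinner ((x::'a::complex_inner_space) - y) z = cinner x z - cinner y z"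
  using cinner_add_left[of x "-y" z] by (simp add: cinner_minus_left)

lemma cinner_diff_right: "cinner (x::'a::complex_inner_space) (y - z) = cinner x y - cinner x z"
  using cinner_add_right[of x y "-z"] by (simp add: cinner_minus_right)

lemma cinner_self_eq: "cinner (x::'a::complex_inner_space) x = complex_of_real ((norm x)\<^sup>2)"
proof -
  have "(norm x)\<^sup>2 = Re (cinner x x)" using norm_eq_sqrt_cinner[of x] cinner_self_nonneg[of x] by simp
  then show ?thesis using cinner_self_real[of x] by (simp add: complex_eq_iff)
qed

lemma cinner_scaleR_right: "cinner (x::'a::complex_inner_space) (r *\<^sub>R y) = complex_of_real r * cinner x y"
  by (simp add: scaleR_scaleC cinner_scaleC_right)

lemma Cauchy_Schwarz: "norm (cinner (x::'a::complex_inner_space) y) \<le> norm x * norm y"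
proof (cases "x = 0")
  case True then show ?thesis by simp
next
  case False
  define d where "d = (norm x)\<^sup>2"
  have d: "d > 0" using False by (simp add: d_def)
  define c where "c = cinner x y"
  define t where "t = c / complex_of_real d"
  have xx: "cinner x x = complex_of_real d" by (simp add: cinner_self_eq d_def)
  have yx: "cinner y x = cnj c" by (simp add: c_def cinner_commute[of y x])
  have "cinner (y - t *\<^sub>C x) (y - t *\<^sub>C x) = cinner y y - t * cinner y x - cnj t * cinner x y + cnj t * t * cinner x x"
    by (simp add: cinner_diff_left cinner_diff_right cinner_scaleC_left cinner_scaleC_right algebra_simps)
  also have "\<dots> = cinner y y - c * cnj c / complex_of_real d"
    using d by (simp add: t_def yx xx c_def[symmetric] field_simps)
  also have "c * cnj c = complex_of_real ((cmod c)\<^sup>2)" by (simp add: complex_norm_square[symmetric])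
  also have "cinner y y = complex_of_real ((norm y)\<^sup>2)" by (rule cinner_self_eq)
  finally have eq: "cinner (y - t *\<^sub>C x) (y - t *\<^sub>C x) = complex_of_real ((norm y)\<^sup>2 - (cmod c)\<^sup>2 / d)"
    by simp
  have "0 \<le> Re (cinner (y - t *\<^sub>C x) (y - t *\<^sub>C x))" by (rule cinner_self_nonneg)
  then have "(cmod c)\<^sup>2 / d \<le> (norm y)\<^sup>2" by (simp add: eq)
  then have "(cmod c)\<^sup>2 \<le> (norm x * norm y)\<^sup>2" using d
    by (simp add: pos_divide_le_eq power_mult_distrib d_def mult.commute)
  then show ?thesis unfolding c_def by (rule power2_le_imp_le) simp
qed

lemma bounded_linear_cinner_right: "bounded_linear (\<lambda>v. cinner (y::'a::complex_inner_space) v)"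
  apply (rule bounded_linear_intro[where K="norm y"])
    apply (simp add: cinner_add_right)
   apply (simp add: cinner_scaleR_right scaleR_conv_of_real)
  by (metis Cauchy_Schwarz mult.commute)

lemma cinner_ext: "(\<And>y. cinner y u = cinner y v) \<Longrightarrow> u = (v::'a::complex_inner_space)"
proof -
  assume h: "\<And>y. cinner y u = cinner y v"
  have "cinner (u - v) (u - v) = 0" using h[of "u-v"] by (simp add: cinner_diff_right)
  then show ?thesis by (simp add: cinner_self_eq_zero)
qed

lemma norm_scaleC: "norm (a *\<^sub>C (x::'a::complex_inner_space)) = cmod a * norm x"
proof -
  have "cinner (a *\<^sub>C x) (a *\<^sub>C x) = (cnj a * a) * cinner x x"
    by (simp add: cinner_scaleC_left cinner_scaleC_right mult.assoc)
  also have "cnj a * a = complex_of_real ((cmod a)\<^sup>2)" by (simp add: complex_norm_square[symmetric] mult.commute)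
  also have "cinner x x = complex_of_real ((norm x)\<^sup>2)" by (rule cinner_self_eq)
  finally have "complex_of_real ((norm (a *\<^sub>C x))\<^sup>2) = complex_of_real ((cmod a * norm x)\<^sup>2)"
    by (simp add: cinner_self_eq power_mult_distrib)
  then have "(norm (a *\<^sub>C x))\<^sup>2 = (cmod a * norm x)\<^sup>2" using of_real_eq_iff by blast
  then show ?thesis by (simp add: power2_eq_iff_nonneg)
qed

lemma bounded_bilinear_scaleC: "bounded_bilinear (\<lambda>(a::complex) (x::'a::complex_inner_space). a *\<^sub>C x)"
proof
  show "(a + a') *\<^sub>C b = a *\<^sub>C b + a' *\<^sub>C b" for a a' and b::'a by (rule scaleC_add_left)
  show "a *\<^sub>C (b + b') = a *\<^sub>C b + a *\<^sub>C b'" for a and b b'::'a by (rule scaleC_add_right)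
  show "(r *\<^sub>R a) *\<^sub>C b = r *\<^sub>R (a *\<^sub>C b)" for r a and b::'a by (simp add: scaleR_scaleC scaleR_conv_of_real)
  show "a *\<^sub>C (r *\<^sub>R b) = r *\<^sub>R (a *\<^sub>C b)" for r a and b::'a by (simp add: scaleR_scaleC mult.commute)
  show "\<exists>K. \<forall>a b. norm (a *\<^sub>C (b::'a)) \<le> norm a * norm b * K"
    by (rule exI[of _ 1]) (simp add: norm_scaleC)
qed

section \<open>Bounded complex-linear operators\<close>

lemma bcl_add: "bounded_clinear T \<Longrightarrow> T (x + y) = T x + T y"
  by (simp add: bounded_clinear_def)
lemma bcl_scaleC: "bounded_clinear T \<Longrightarrow> T (a *\<^sub>C x) = a *\<^sub>C T x"
  by (simp add: bounded_clinear_def)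
lemma bcl_zero: "bounded_clinear T \<Longrightarrow> T 0 = 0"
  using bcl_scaleC[of T 0 0] by simp
lemma bcl_minus: "bounded_clinear T \<Longrightarrow> T (- x) = - T x"
  using bcl_add[of T x "-x"] bcl_zero[of T] by (auto simp: add_eq_0_iff)
lemma bcl_diff: "bounded_clinear T \<Longrightarrow> T (x - y) = T x - T y"
  using bcl_add[of T x "-y"] bcl_minus[of T y] by simp
lemma bcl_bound: "bounded_clinear T \<Longrightarrow> \<exists>K>0. \<forall>x. norm (T x) \<le> K * norm x"
proof -
  assume "bounded_clinear T"
  then obtain K where K: "\<And>x. norm (T x) \<le> norm x * K" by (auto simp: bounded_clinear_def)
  have "norm (T x) \<le> max K 1 * norm x" for x
  proof -
    have "norm (T x) \<le> norm x * K" by (rule K)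
    also have "\<dots> \<le> norm x * max K 1" by (rule mult_left_mono) auto
    finally show ?thesis by (simp add: mult.commute)
  qed
  then show ?thesis by (intro exI[of _ "max K 1"]) auto
qed
lemma bcl_linear: "bounded_clinear T \<Longrightarrow> bounded_linear T"
proof -
  assume T: "bounded_clinear T"
  then obtain K where K: "\<And>x. norm (T x) \<le> norm x * K" by (auto simp: bounded_clinear_def)
  show ?thesis
  proof (rule bounded_linear_intro[where K=K])
    show "T (x + y) = T x + T y" for x y by (rule bcl_add[OF T])
    show "T (r *\<^sub>R x) = r *\<^sub>R T x" for r x
      unfolding scaleR_scaleC by (rule bcl_scaleC[OF T])
    show "norm (T x) \<le> norm x * K" for x by (rule K)
  qed
qed
lemma bcl_comp: "bounded_clinear S \<Longrightarrow> bounded_clinear T \<Longrightarrow> bounded_clinear (\<lambda>x. S (T x))"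
proof -
  assume S: "bounded_clinear S" and T: "bounded_clinear T"
  obtain K1 where K1: "K1 > 0" "\<And>x. norm (S x) \<le> K1 * norm x" using bcl_bound[OF S] by auto
  obtain K2 where K2: "K2 > 0" "\<And>x. norm (T x) \<le> K2 * norm x" using bcl_bound[OF T] by auto
  have "norm (S (T x)) \<le> norm x * (K1 * K2)" for x
  proof -
    have "norm (S (T x)) \<le> K1 * norm (T x)" by (rule K1(2))
    also have "\<dots> \<le> K1 * (K2 * norm x)" using K1(1) K2(2) by (simp add: mult_left_mono)
    finally show ?thesis by (simp add: algebra_simps)
  qed
  then show ?thesis unfolding bounded_clinear_def
    by (intro conjI allI exI[of _ "K1 * K2"]) (simp_all add: bcl_add[OF S] bcl_add[OF T] bcl_scaleC[OF S] bcl_scaleC[OF T])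
qed
lemma bcl_id: "bounded_clinear (\<lambda>x::'a::complex_inner_space. x)"
  unfolding bounded_clinear_def by (intro conjI exI[of _ 1]) auto
lemma bcl_diff_op: "bounded_clinear S \<Longrightarrow> bounded_clinear T \<Longrightarrow> bounded_clinear (\<lambda>x. S x - T x)"
proof -
  assume S: "bounded_clinear S" and T: "bounded_clinear T"
  obtain K1 where K1: "\<And>x. norm (S x) \<le> K1 * norm x" using bcl_bound[OF S] by auto
  obtain K2 where K2: "\<And>x. norm (T x) \<le> K2 * norm x" using bcl_bound[OF T] by auto
  have "norm (S x - T x) \<le> norm x * (K1 + K2)" for x
    using norm_triangle_ineq4[of "S x" "T x"] K1[of x] K2[of x] by (simp add: algebra_simps)
  then show ?thesis unfolding bounded_clinear_def
    by (intro conjI allI exI[of _ "K1 + K2"]) (simp_all add: bcl_add[OF S] bcl_add[OF T] bcl_scaleC[OF S] bcl_scaleC[OF T] scaleC_diff_right)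
qed
lemma bcl_scal: "bounded_clinear (\<lambda>x::'a::complex_inner_space. c *\<^sub>C x)"
  unfolding bounded_clinear_def
  by (intro conjI allI exI[of _ "cmod c"]) (auto simp: scaleC_add_right norm_scaleC mult.commute)
lemma bcl_funpow:
  fixes T :: "'a::complex_inner_space \<Rightarrow> 'a"
  assumes "bounded_clinear T" shows "bounded_clinear (T ^^ k)"
  using assms
proof (induction k)
  case 0
  have "T ^^ 0 = (\<lambda>x. x)" by (simp add: fun_eq_iff)
  then show ?case using bcl_id by metis
next
  case (Suc k) then show ?case using bcl_comp[of T "T^^k"] by (simp add: comp_def)
qed

section \<open>Vector-valued circle integrals\<close>

definition VI :: "complex \<Rightarrow> real \<Rightarrow> (complex \<Rightarrow> 'a::complex_hilbert_space) \<Rightarrow> 'a" where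
  "VI z r g = integral {0..1} (\<lambda>t. (circlepath z r t - z) *\<^sub>C g (circlepath z r t))"

lemma circlepath_minus: "circlepath z r t - z = r * exp (2 * of_real pi * \<i> * of_real t)"
  by (simp add: circlepath)

lemma circlepath_in_sphere: "r > 0 \<Longrightarrow> circlepath z r t \<in> sphere z r"
  by (simp add: circlepath dist_norm norm_mult)

lemma continuous_on_scaleC:
  fixes g :: "'b::topological_space \<Rightarrow> 'a::complex_inner_space"
  shows "continuous_on S f \<Longrightarrow> continuous_on S g \<Longrightarrow> continuous_on S (\<lambda>x. f x *\<^sub>C g x)"
  using bounded_bilinear.continuous_on[OF bounded_bilinear_scaleC] by blast

lemma VI_integrand_cont:
  fixes g :: "complex \<Rightarrow> 'a::complex_hilbert_space"
  assumes r: "r > 0" and g: "continuous_on (sphere z r) g"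
  shows "continuous_on {0..1} (\<lambda>t. (circlepath z r t - z) *\<^sub>C g (circlepath z r t))"
proof (rule continuous_on_scaleC)
  have c: "continuous_on {0..1} (circlepath z r)"
    using path_circlepath unfolding path_def .
  then show "continuous_on {0..1} (\<lambda>t. circlepath z r t - z)" by (intro continuous_intros)
  show "continuous_on {0..1} (\<lambda>t. g (circlepath z r t))"
    by (rule continuous_on_compose2[OF g c]) (use circlepath_in_sphere[OF r] in auto)
qed

lemma VI_weak:
  fixes g :: "complex \<Rightarrow> 'a::complex_hilbert_space"
  assumes r: "r > 0" and g: "continuous_on (sphere z r) g"
  shows "((\<lambda>w. cinner y (g w)) has_contour_integral (2 * of_real pi * \<i> * cinner y (VI z r g))) (circlepath z r)"
proof -
  define h where "h = (\<lambda>t. (circlepath z r t - z) *\<^sub>C g (circlepath z r t))"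
  have "h integrable_on {0..1}" unfolding h_def by (rule integrable_continuous_interval[OF VI_integrand_cont[OF r g]])
  then have "((\<lambda>t. cinner y (h t)) has_integral cinner y (VI z r g)) {0..1}"
    unfolding VI_def h_def[symmetric]
    using has_integral_linear[OF integrable_integral bounded_linear_cinner_right] by (simp add: comp_def)
  then have "((\<lambda>t. (2 * of_real pi * \<i>) * cinner y (h t)) has_integral (2 * of_real pi * \<i> * cinner y (VI z r g))) {0..1}"
    by (rule has_integral_mult_right)
  then show ?thesis unfolding has_contour_integral_def
  proof (rule has_integral_eq[rotated])
    fix t :: real assume t: "t \<in> {0..1}"
    show "2 * complex_of_real pi * \<i> * cinner y (h t) = cinner y (g (circlepath z r t)) * vector_derivative (circlepath z r) (at t within {0..1})"
      using t by (simp add: vector_derivative_circlepath01 h_def cinner_scaleC_right circlepath_minus)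
  qed
qed

lemma VI_unique:
  fixes g :: "complex \<Rightarrow> 'a::complex_hilbert_space"
  assumes r: "r > 0" and g: "continuous_on (sphere z r) g"
    and h: "\<And>y. ((\<lambda>w. cinner y (g w)) has_contour_integral (2 * of_real pi * \<i> * cinner y v)) (circlepath z r)"
  shows "VI z r g = v"
proof (rule cinner_ext)
  fix y
  have "2 * of_real pi * \<i> * cinner y (VI z r g) = 2 * of_real pi * \<i> * cinner y v"
    using has_contour_integral_unique[OF VI_weak[OF r g] h] .
  then show "cinner y (VI z r g) = cinner y v" by simp
qed

locale pole_setting =
  fixes A As :: "'a::complex_hilbert_space \<Rightarrow> 'a" and n :: nat and lam :: complex
    and rho :: real and R :: "complex \<Rightarrow> 'a \<Rightarrow> 'a"
  assumes A: "bounded_clinear A"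
    and adj: "\<And>x y. cinner (A x) y = cinner x (As y)"
    and comm: "\<And>x. As ((A ^^ n) x) = (A ^^ n) (As x)"
    and npos: "n > 0"
    and rho: "rho > 0"
    and Rlin: "\<And>z. z \<in> ball lam rho - {lam} \<Longrightarrow> bounded_clinear (R z)"
    and Rleft: "\<And>z x. z \<in> ball lam rho - {lam} \<Longrightarrow> R z (A x - z *\<^sub>C x) = x"
    and Rright: "\<And>z x. z \<in> ball lam rho - {lam} \<Longrightarrow> A (R z x) - z *\<^sub>C R z x = x"
begin

abbreviation "Om \<equiv> ball lam rho - {lam}"

lemma open_Om: "open Om" by (simp add: open_delete)

lemma R_A_comm: assumes z: "z \<in> Om" shows "R z (A x) = A (R z x)"
proof -
  have "R z (A x) = R z ((A x - z *\<^sub>C x) + z *\<^sub>C x)" by simp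
  also have "\<dots> = R z (A x - z *\<^sub>C x) + R z (z *\<^sub>C x)" by (rule bcl_add[OF Rlin[OF z]])
  also have "\<dots> = x + z *\<^sub>C R z x" by (simp add: bcl_scaleC[OF Rlin[OF z]] Rleft[OF z])
  also have "\<dots> = A (R z x)" using Rright[OF z, of x] by (simp add: algebra_simps)
  finally show ?thesis .
qed

lemma resolvent_id:
  assumes z: "z \<in> Om" and z0: "z0 \<in> Om"
  shows "R z x - R z0 x = (z - z0) *\<^sub>C R z (R z0 x)"
proof -
  define u where "u = R z0 x"
  have x: "x = (A u - z *\<^sub>C u) + (z - z0) *\<^sub>C u"
    using Rright[OF z0, of x] by (simp add: u_def scaleC_diff_left algebra_simps)
  have "R z x = R z (A u - z *\<^sub>C u) + R z ((z - z0) *\<^sub>C u)"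
    by (subst x) (rule bcl_add[OF Rlin[OF z]])
  also have "\<dots> = u + (z - z0) *\<^sub>C R z u" by (simp add: bcl_scaleC[OF Rlin[OF z]] Rleft[OF z])
  finally have "R z x = u + (z - z0) *\<^sub>C R z u" .
  then show ?thesis by (simp add: u_def)
qed

lemma R_local_bound:
  assumes z0: "z0 \<in> Om"
  shows "\<exists>K>0. \<exists>d>0. ball z0 d \<subseteq> Om \<and> (\<forall>z\<in>ball z0 d. \<forall>x. norm (R z x) \<le> K * norm x)"
proof -
  obtain K0 where K0: "K0 > 0" "\<And>x. norm (R z0 x) \<le> K0 * norm x" using bcl_bound[OF Rlin[OF z0]] by auto
  obtain e where e: "e > 0" "ball z0 e \<subseteq> Om" using open_Om z0 openE by blast
  define d where "d = min e (1 / (2 * K0))"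
  have d: "d > 0" using e K0 by (simp add: d_def)
  have "norm (R z x) \<le> (2 * K0) * norm x" if z: "z \<in> ball z0 d" for z x
  proof -
    have zO: "z \<in> Om" using z e by (auto simp: d_def)
    have "R z0 (R z x) - R z (R z x) = (z0 - z) *\<^sub>C R z0 (R z (R z x))" by (rule resolvent_id[OF z0 zO])
    have eq: "R z x = R z0 x + (z - z0) *\<^sub>C R z0 (R z x)"
      using resolvent_id[OF z0 zO, of x] by (simp add: scaleC_diff_left algebra_simps scaleC_minus_left)
    have dz: "cmod (z - z0) * K0 \<le> 1/2"
    proof -
      have "cmod (z - z0) < 1 / (2 * K0)" using z by (simp add: d_def dist_norm norm_minus_commute)
      then show ?thesis using K0 by (simp add: field_simps)
    qed
    have "norm (R z x) \<le> norm (R z0 x) + norm ((z - z0) *\<^sub>C R z0 (R z x))"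
      by (subst eq) (rule norm_triangle_ineq)
    also have "\<dots> \<le> K0 * norm x + cmod (z - z0) * (K0 * norm (R z x))"
      unfolding norm_scaleC by (intro add_mono K0(2) mult_left_mono[OF K0(2)]) simp
    also have "\<dots> \<le> K0 * norm x + (1/2) * norm (R z x)"
      using dz by (intro add_left_mono) (metis mult.assoc mult_right_mono norm_ge_zero)
    finally show ?thesis by simp
  qed
  moreover have "ball z0 d \<subseteq> Om" using e by (auto simp: d_def)
  ultimately show ?thesis using d K0 by (intro exI[of _ "2 * K0"]) auto
qed

lemma R_tendsto:
  assumes z0: "z0 \<in> Om"
  shows "((\<lambda>z. R z u) \<longlongrightarrow> R z0 u) (at z0)"
proof -
  obtain K d where K: "K > 0" and d: "d > 0" "ball z0 d \<subseteq> Om"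
    and b: "\<And>z x. z \<in> ball z0 d \<Longrightarrow> norm (R z x) \<le> K * norm x"
    using R_local_bound[OF z0] by blast
  show ?thesis
  proof (rule LIM_zero_cancel, rule Lim_null_comparison[where g="\<lambda>z. cmod (z - z0) * (K * norm (R z0 u))"])
  have ev: "eventually (\<lambda>z. z \<in> ball z0 d) (at z0)"
    using d by (intro eventually_at_in_open') auto
  show "eventually (\<lambda>z. norm (R z u - R z0 u) \<le> cmod (z - z0) * (K * norm (R z0 u))) (at z0)"
    using ev
  proof eventually_elim
    case (elim z)
    have zO: "z \<in> Om" using elim d by auto
    have "norm (R z u - R z0 u) = cmod (z - z0) * norm (R z (R z0 u))"
      using resolvent_id[OF zO z0, of u] by (simp add: norm_scaleC)
    also have "\<dots> \<le> cmod (z - z0) * (K * norm (R z0 u))"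
      by (intro mult_left_mono b elim) auto
    finally show ?case .
  qed
  show "((\<lambda>z. cmod (z - z0) * (K * norm (R z0 u))) \<longlongrightarrow> 0) (at z0)"
    by (rule tendsto_mult_left_zero) (intro tendsto_eq_intros, auto)
  qed
qed

lemma R_cont: "continuous_on Om (\<lambda>z. R z u)"
  using R_tendsto open_Om by (simp add: continuous_on_eq_continuous_at isCont_def)

lemma R_holo: "(\<lambda>z. cinner y (R z w)) holomorphic_on Om"
  unfolding holomorphic_on_open[OF open_Om]
proof
  fix z0 assume z0: "z0 \<in> Om"
  have lim: "((\<lambda>z. cinner y (R z (R z0 w))) \<longlongrightarrow> cinner y (R z0 (R z0 w))) (at z0)"
    using bounded_linear.tendsto[OF bounded_linear_cinner_right R_tendsto[OF z0]] .
  have ev: "eventually (\<lambda>z. z \<in> Om) (at z0)"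
    using z0 open_Om by (intro eventually_at_in_open') auto
  have "((\<lambda>z. (cinner y (R z w) - cinner y (R z0 w)) / (z - z0)) \<longlongrightarrow> cinner y (R z0 (R z0 w))) (at z0)"
  proof (rule Lim_transform_eventually[OF lim])
    show "eventually (\<lambda>z. cinner y (R z (R z0 w)) = (cinner y (R z w) - cinner y (R z0 w)) / (z - z0)) (at z0)"
      using ev eventually_neq_at_within[of z0 z0 UNIV]
    proof eventually_elim
      case (elim z)
      then have zO: "z \<in> Om" and ne: "z \<noteq> z0" by auto
      have "cinner y (R z w) - cinner y (R z0 w) = (z - z0) * cinner y (R z (R z0 w))"
        using resolvent_id[OF zO z0, of w] by (simp add: cinner_diff_right[symmetric] cinner_scaleC_right)
      then show ?case using ne by (simp add: field_simps)
    qed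
  qed
  then show "\<exists>f'. ((\<lambda>z. cinner y (R z w)) has_field_derivative f') (at z0)"
    by (auto simp: has_field_derivative_iff)
qed

end

lemma VI_cong:
  assumes r: "r > 0" and h: "\<And>w. w \<in> sphere z r \<Longrightarrow> g1 w = g2 w"
  shows "VI z r g1 = VI z r g2"
  unfolding VI_def by (rule integral_cong) (metis h circlepath_in_sphere[OF r])

lemma VI_add:
  fixes g1 g2 :: "complex \<Rightarrow> 'a::complex_hilbert_space"
  assumes r: "r > 0" and g1: "continuous_on (sphere z r) g1" and g2: "continuous_on (sphere z r) g2"
  shows "VI z r (\<lambda>w. g1 w + g2 w) = VI z r g1 + VI z r g2"
proof (rule VI_unique[OF r])
  show "continuous_on (sphere z r) (\<lambda>w. g1 w + g2 w)" using g1 g2 by (intro continuous_intros)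
  show "((\<lambda>w. cinner y (g1 w + g2 w)) has_contour_integral 2 * of_real pi * \<i> * cinner y (VI z r g1 + VI z r g2)) (circlepath z r)" for y
    using has_contour_integral_add[OF VI_weak[OF r g1, of y] VI_weak[OF r g2, of y]]
    by (simp add: cinner_add_right algebra_simps)
qed

lemma VI_scaleC:
  fixes g :: "complex \<Rightarrow> 'a::complex_hilbert_space"
  assumes r: "r > 0" and g: "continuous_on (sphere z r) g"
  shows "VI z r (\<lambda>w. c *\<^sub>C g w) = c *\<^sub>C VI z r g"
proof (rule VI_unique[OF r])
  show "continuous_on (sphere z r) (\<lambda>w. c *\<^sub>C g w)" using g by (intro continuous_on_scaleC continuous_intros)
  show "((\<lambda>w. cinner y (c *\<^sub>C g w)) has_contour_integral 2 * of_real pi * \<i> * cinner y (c *\<^sub>C VI z r g)) (circlepath z r)" for y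
    using has_contour_integral_lmul[OF VI_weak[OF r g, of y], of c]
    by (simp add: cinner_scaleC_right algebra_simps)
qed

lemma VI_scalar_fun:
  fixes x :: "'a::complex_hilbert_space"
  assumes r: "r > 0" and f: "continuous_on (sphere z r) f" and i: "(f has_contour_integral i) (circlepath z r)"
  shows "VI z r (\<lambda>w. f w *\<^sub>C x) = (i / (2 * of_real pi * \<i>)) *\<^sub>C x"
proof (rule VI_unique[OF r])
  show "continuous_on (sphere z r) (\<lambda>w. f w *\<^sub>C x)" using f by (intro continuous_on_scaleC continuous_intros)
  show "((\<lambda>w. cinner y (f w *\<^sub>C x)) has_contour_integral 2 * of_real pi * \<i> * cinner y ((i / (2 * of_real pi * \<i>)) *\<^sub>C x)) (circlepath z r)" for y
    using has_contour_integral_rmul[OF i, of "cinner y x"]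
    by (simp add: cinner_scaleC_right)
qed

lemma VI_linear:
  fixes g :: "complex \<Rightarrow> 'a::complex_hilbert_space"
  assumes r: "r > 0" and g: "continuous_on (sphere z r) g" and L: "bounded_clinear L"
  shows "L (VI z r g) = VI z r (\<lambda>w. L (g w))"
proof -
  define h where "h = (\<lambda>t. (circlepath z r t - z) *\<^sub>C g (circlepath z r t))"
  have "h integrable_on {0..1}" unfolding h_def by (rule integrable_continuous_interval[OF VI_integrand_cont[OF r g]])
  then have "integral {0..1} (L \<circ> h) = L (integral {0..1} h)"
    by (rule integral_linear[OF _ bcl_linear[OF L]])
  moreover have "L \<circ> h = (\<lambda>t. (circlepath z r t - z) *\<^sub>C L (g (circlepath z r t)))"
    by (simp add: h_def comp_def bcl_scaleC[OF L])
  ultimately show ?thesis by (simp add: VI_def h_def)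
qed

lemma VI_bound:
  fixes g :: "complex \<Rightarrow> 'a::complex_hilbert_space"
  assumes r: "r > 0" and g: "continuous_on (sphere z r) g" and B: "\<And>w. w \<in> sphere z r \<Longrightarrow> norm (g w) \<le> B"
  shows "norm (VI z r g) \<le> r * B"
proof -
  have "norm (integral {0..1} (\<lambda>t. (circlepath z r t - z) *\<^sub>C g (circlepath z r t))) \<le> (r * B) * (1 - 0)"
  proof (rule integral_bound)
    show "continuous_on {0..1} (\<lambda>t. (circlepath z r t - z) *\<^sub>C g (circlepath z r t))"
      by (rule VI_integrand_cont[OF r g])
    fix t :: real assume "t \<in> {0..1}"
    have "norm ((circlepath z r t - z) *\<^sub>C g (circlepath z r t)) = r * norm (g (circlepath z r t))"
      using r by (simp add: norm_scaleC circlepath_minus norm_mult)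
    also have "\<dots> \<le> r * B" using r B[OF circlepath_in_sphere[OF r]] by (simp add: mult_left_mono)
    finally show "norm ((circlepath z r t - z) *\<^sub>C g (circlepath z r t)) \<le> r * B" .
  qed simp
  then show ?thesis by (simp add: VI_def)
qed

section \<open>Polynomial functions\<close>

inductive pf :: "(complex \<Rightarrow> complex) \<Rightarrow> bool" where
  pf_const: "pf (\<lambda>z. c)"
| pf_id: "pf (\<lambda>z. z)"
| pf_add: "pf f \<Longrightarrow> pf g \<Longrightarrow> pf (\<lambda>z. f z + g z)"
| pf_mult: "pf f \<Longrightarrow> pf g \<Longrightarrow> pf (\<lambda>z. f z * g z)"

lemma pf_holo: "pf f \<Longrightarrow> f holomorphic_on S"
  by (induction rule: pf.induct) (auto intro!: holomorphic_intros)

lemma pf_cont: "pf f \<Longrightarrow> continuous_on S f"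
  using pf_holo holomorphic_on_imp_continuous_on by blast

lemma pf_int0: "pf f \<Longrightarrow> (f has_contour_integral 0) (circlepath z r)"
  by (rule Cauchy_theorem_convex_simple[OF pf_holo convex_UNIV]) auto

lemma pf_pow: "pf f \<Longrightarrow> pf (\<lambda>z. f z ^ k)"
proof (induction k)
  case 0 then show ?case using pf_const[of 1] by simp
next
  case (Suc k) then show ?case using pf_mult[of f "\<lambda>z. f z ^ k"] by simp
qed

lemma pf_sum: "(\<And>i. pf (f i)) \<Longrightarrow> pf (\<lambda>z. \<Sum>i<(k::nat). f i z)"
proof (induction k)
  case 0 then show ?case using pf_const[of 0] by simp
next
  case (Suc k) then show ?case using pf_add[of "\<lambda>z. \<Sum>i<k. f i z" "f k"] by simp
qed

lemma pf_cmult: "pf f \<Longrightarrow> pf (\<lambda>z. c * f z)"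
  using pf_mult[OF pf_const] by blast

lemma pf_diff: "pf f \<Longrightarrow> pf g \<Longrightarrow> pf (\<lambda>z. f z - g z)"
  using pf_add[of f "\<lambda>z. (-1) * g z"] pf_cmult[of g "-1"] by simp

context pole_setting begin

lemma sphere_sub_Om: "0 < r \<Longrightarrow> r < rho \<Longrightarrow> sphere lam r \<subseteq> Om"
  by (auto simp: dist_commute)

lemma R_unif_bound:
  assumes r: "0 < r" "r < rho"
  shows "\<exists>M\<ge>0. \<forall>z\<in>sphere lam r. \<forall>x. norm (R z x) \<le> M * norm x"
proof -
  have "\<forall>z\<in>sphere lam r. \<exists>Kd. fst Kd > 0 \<and> snd Kd > 0 \<and> (\<forall>z'\<in>ball z (snd Kd). \<forall>x. norm (R z' x) \<le> fst Kd * norm x)"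
  proof
    fix z assume "z \<in> sphere lam r"
    then have "z \<in> Om" using sphere_sub_Om[OF r] by auto
    then obtain K d where "K > 0" "d > 0" "\<forall>z'\<in>ball z d. \<forall>x. norm (R z' x) \<le> K * norm x"
      using R_local_bound by blast
    then show "\<exists>Kd. fst Kd > 0 \<and> snd Kd > 0 \<and> (\<forall>z'\<in>ball z (snd Kd). \<forall>x. norm (R z' x) \<le> fst Kd * norm x)"
      by (intro exI[of _ "(K, d)"]) auto
  qed
  then obtain F where F: "\<And>z. z \<in> sphere lam r \<Longrightarrow> fst (F z) > 0 \<and> snd (F z) > 0 \<and> (\<forall>z'\<in>ball z (snd (F z)). \<forall>x. norm (R z' x) \<le> fst (F z) * norm x)"
    by metis
  have "sphere lam r \<subseteq> (\<Union>c\<in>sphere lam r. ball c (snd (F c)))"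
    using F by force
  then obtain C where C: "C \<subseteq> sphere lam r" "finite C" "sphere lam r \<subseteq> (\<Union>c\<in>C. ball c (snd (F c)))"
    using compactE_image[OF compact_sphere[of lam r], of "sphere lam r" "\<lambda>c. ball c (snd (F c))"] by blast
  define M where "M = (\<Sum>c\<in>C. fst (F c))"
  have Fpos: "c \<in> C \<Longrightarrow> fst (F c) \<ge> 0" for c using C(1) F[of c] by auto
  have M0: "M \<ge> 0" unfolding M_def using Fpos by (intro sum_nonneg) auto
  have "norm (R z x) \<le> M * norm x" if z: "z \<in> sphere lam r" for z x
  proof -
    obtain c where c: "c \<in> C" "z \<in> ball c (snd (F c))" using C(3) z by auto
    have "norm (R z x) \<le> fst (F c) * norm x" using F[of c] c C(1) by auto
    also have "fst (F c) \<le> M" unfolding M_def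
      using C c Fpos by (intro member_le_sum) auto
    then have "fst (F c) * norm x \<le> M * norm x" by (simp add: mult_right_mono)
    finally show ?thesis .
  qed
  then show ?thesis using M0 by blast
qed

definition G :: "real \<Rightarrow> (complex \<Rightarrow> complex) \<Rightarrow> 'a \<Rightarrow> 'a" where
  "G r f w = - VI lam r (\<lambda>z. f z *\<^sub>C R z w)"

lemma cont_fR:
  assumes r: "0 < r" "r < rho" and f: "continuous_on (sphere lam r) f"
  shows "continuous_on (sphere lam r) (\<lambda>z. f z *\<^sub>C R z w)"
  using f continuous_on_subset[OF R_cont sphere_sub_Om[OF r]] by (rule continuous_on_scaleC)

end

context pole_setting begin

lemma G_add_fun:
  assumes r: "0 < r" "r < rho" and f: "continuous_on (sphere lam r) f" and g: "continuous_on (sphere lam r) g"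
  shows "G r (\<lambda>z. f z + g z) w = G r f w + G r g w"
proof -
  have "(\<lambda>z. (f z + g z) *\<^sub>C R z w) = (\<lambda>z. f z *\<^sub>C R z w + g z *\<^sub>C R z w)"
    by (simp add: scaleC_add_left)
  then show ?thesis
    unfolding G_def using VI_add[OF r(1) cont_fR[OF r f] cont_fR[OF r g]] by simp
qed

lemma G_scal_fun:
  assumes r: "0 < r" "r < rho" and f: "continuous_on (sphere lam r) f"
  shows "G r (\<lambda>z. c * f z) w = c *\<^sub>C G r f w"
proof -
  have "(\<lambda>z. (c * f z) *\<^sub>C R z w) = (\<lambda>z. c *\<^sub>C (f z *\<^sub>C R z w))" by simp
  then show ?thesis
    unfolding G_def using VI_scaleC[OF r(1) cont_fR[OF r f]] by (simp add: scaleC_minus_right)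
qed

lemma G_A:
  assumes r: "0 < r" "r < rho" and f: "pf f"
  shows "A (G r f w) = G r (\<lambda>z. z * f z) w"
proof -
  have fc: "continuous_on (sphere lam r) f" by (rule pf_cont[OF f])
  have zfc: "continuous_on (sphere lam r) (\<lambda>z. z * f z)" by (rule pf_cont[OF pf_mult[OF pf_id f]])
  have "A (VI lam r (\<lambda>z. f z *\<^sub>C R z w)) = VI lam r (\<lambda>z. A (f z *\<^sub>C R z w))"
    by (rule VI_linear[OF r(1) cont_fR[OF r fc] A])
  also have "\<dots> = VI lam r (\<lambda>z. f z *\<^sub>C w + (z * f z) *\<^sub>C R z w)"
  proof (rule VI_cong[OF r(1)])
    fix z assume "z \<in> sphere lam r"
    then have z: "z \<in> Om" using sphere_sub_Om[OF r] by auto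
    have "A (R z w) = w + z *\<^sub>C R z w" using Rright[OF z, of w] by (simp add: algebra_simps)
    then show "A (f z *\<^sub>C R z w) = f z *\<^sub>C w + (z * f z) *\<^sub>C R z w"
      by (simp add: bcl_scaleC[OF A] scaleC_add_right mult.commute)
  qed
  also have "\<dots> = VI lam r (\<lambda>z. f z *\<^sub>C w) + VI lam r (\<lambda>z. (z * f z) *\<^sub>C R z w)"
    by (rule VI_add[OF r(1)]) (auto intro: continuous_on_scaleC fc continuous_intros cont_fR[OF r zfc])
  also have "VI lam r (\<lambda>z. f z *\<^sub>C w) = 0"
    using VI_scalar_fun[OF r(1) fc pf_int0[OF f]] by simp
  finally show ?thesis unfolding G_def by (simp add: bcl_minus[OF A])
qed

lemma G_Aw:
  assumes r: "0 < r" "r < rho" and f: "continuous_on (sphere lam r) f"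
  shows "G r f (A w) = A (G r f w)"
proof -
  have "VI lam r (\<lambda>z. f z *\<^sub>C R z (A w)) = VI lam r (\<lambda>z. A (f z *\<^sub>C R z w))"
  proof (rule VI_cong[OF r(1)])
    fix z assume "z \<in> sphere lam r"
    then have z: "z \<in> Om" using sphere_sub_Om[OF r] by auto
    show "f z *\<^sub>C R z (A w) = A (f z *\<^sub>C R z w)" by (simp add: R_A_comm[OF z] bcl_scaleC[OF A])
  qed
  also have "\<dots> = A (VI lam r (\<lambda>z. f z *\<^sub>C R z w))"
    by (rule VI_linear[OF r(1) cont_fR[OF r f] A, symmetric])
  finally show ?thesis unfolding G_def by (simp add: bcl_minus[OF A])
qed

lemma VI_fR_residue:
  assumes r: "0 < r" "r < rho" and f: "pf f"
  shows "cinner y (VI lam r (\<lambda>z. f z *\<^sub>C R z w)) = residue (\<lambda>z. f z * cinner y (R z w)) lam"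
proof -
  define h where "h = (\<lambda>z. f z * cinner y (R z w))"
  have holo: "h holomorphic_on (ball lam rho - {lam})"
    unfolding h_def by (intro holomorphic_on_mult pf_holo[OF f] R_holo)
  have 1: "(h has_contour_integral 2 * pi * \<i> * residue h lam) (circlepath lam r)"
    by (rule base_residue[OF open_ball _ r(1) holo]) (use r rho in auto)
  have 2: "(h has_contour_integral 2 * of_real pi * \<i> * cinner y (VI lam r (\<lambda>z. f z *\<^sub>C R z w))) (circlepath lam r)"
    using VI_weak[OF r(1) cont_fR[OF r pf_cont[OF f]], of y] by (simp add: h_def cinner_scaleC_right)
  from has_contour_integral_unique[OF 1 2] show ?thesis by (simp add: h_def)
qed

lemma G_indep:
  assumes r1: "0 < r1" "r1 < rho" and r2: "0 < r2" "r2 < rho" and f: "pf f"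
  shows "G r1 f w = G r2 f w"
proof -
  have "VI lam r1 (\<lambda>z. f z *\<^sub>C R z w) = VI lam r2 (\<lambda>z. f z *\<^sub>C R z w)"
    by (rule cinner_ext) (simp add: VI_fR_residue[OF r1 f] VI_fR_residue[OF r2 f])
  then show ?thesis by (simp add: G_def)
qed

lemma G_bound:
  assumes r: "0 < r" "r < rho" and f: "continuous_on (sphere lam r) f"
    and B: "\<And>z. z \<in> sphere lam r \<Longrightarrow> cmod (f z) \<le> B"
    and M: "M \<ge> 0" "\<And>z x. z \<in> sphere lam r \<Longrightarrow> norm (R z x) \<le> M * norm x"
  shows "norm (G r f w) \<le> r * (B * (M * norm w))"
proof -
  have "norm (VI lam r (\<lambda>z. f z *\<^sub>C R z w)) \<le> r * (B * (M * norm w))"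
  proof (rule VI_bound[OF r(1) cont_fR[OF r f]])
    fix z assume z: "z \<in> sphere lam r"
    have "norm (f z *\<^sub>C R z w) = cmod (f z) * norm (R z w)" by (rule norm_scaleC)
    also have "\<dots> \<le> B * (M * norm w)"
      by (rule mult_mono[OF B[OF z] M(2)[OF z]]) (auto intro: order_trans[OF norm_ge_zero B[OF z]])
    finally show "norm (f z *\<^sub>C R z w) \<le> B * (M * norm w)" .
  qed
  then show ?thesis by (simp add: G_def)
qed

definition T :: "'a \<Rightarrow> 'a" where "T x = A x - lam *\<^sub>C x"

lemma T_bcl: "bounded_clinear T"
  unfolding T_def[abs_def] by (rule bcl_diff_op[OF A bcl_scal])

lemma T_R: "z \<in> Om \<Longrightarrow> T (R z x) = x + (z - lam) *\<^sub>C R z x"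
  using Rright[of z x] by (simp add: T_def scaleC_diff_left algebra_simps)

lemma R_T_comm: "z \<in> Om \<Longrightarrow> R z (T x) = T (R z x)"
  by (simp add: T_def bcl_diff[OF Rlin] bcl_scaleC[OF Rlin] R_A_comm)

lemma G_T:
  assumes r: "0 < r" "r < rho" and f: "pf f"
  shows "T (G r f w) = G r (\<lambda>z. (z - lam) * f z) w"
proof -
  have fc: "continuous_on (sphere lam r) f" by (rule pf_cont[OF f])
  have zfc: "continuous_on (sphere lam r) (\<lambda>z. z * f z)" by (rule pf_cont[OF pf_mult[OF pf_id f]])
  have "(\<lambda>z. (z - lam) * f z) = (\<lambda>z. z * f z + (- lam) * f z)" by (simp add: fun_eq_iff algebra_simps)
  then have "G r (\<lambda>z. (z - lam) * f z) w = G r (\<lambda>z. z * f z) w + (- lam) *\<^sub>C G r f w"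
    using G_add_fun[OF r zfc, of "\<lambda>z. (- lam) * f z" w] G_scal_fun[OF r fc, of "- lam" w]
    by (simp add: continuous_intros fc)
  then show ?thesis by (simp add: T_def G_A[OF r f] scaleC_minus_left)
qed

definition P :: "'a \<Rightarrow> 'a" where "P w = G (rho/2) (\<lambda>z. 1) w"
definition S :: "'a \<Rightarrow> 'a" where "S x = VI lam (rho/2) (\<lambda>z. inverse (z - lam) *\<^sub>C R z x)"

lemma r0: "0 < rho/2" "rho/2 < rho" using rho by auto

lemma inv_cont: "r > 0 \<Longrightarrow> continuous_on (sphere lam r) (\<lambda>z. inverse (z - lam))"
  by (intro continuous_intros) auto

lemma inv_int: "r > 0 \<Longrightarrow> ((\<lambda>z. inverse (z - lam)) has_contour_integral 2 * of_real pi * \<i>) (circlepath lam r)"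
proof -
  assume r: "r > 0"
  have "(\<lambda>z. inverse (z - lam)) contour_integrable_on (circlepath lam r)"
    using r by (intro contour_integrable_continuous_circlepath) (auto intro!: continuous_intros)
  from has_contour_integral_integral[OF this] show ?thesis
    using contour_integral_circlepath[OF r, of lam] by (simp add: inverse_eq_divide)
qed

lemma cont_invR: "continuous_on (sphere lam (rho/2)) (\<lambda>z. inverse (z - lam) *\<^sub>C R z x)"
  by (rule cont_fR[OF r0 inv_cont]) (use r0 in auto)

lemma TS: "T (S x) = x - P x"
proof -
  have "T (S x) = VI lam (rho/2) (\<lambda>z. T (inverse (z - lam) *\<^sub>C R z x))"
    unfolding S_def by (rule VI_linear[OF r0(1) cont_invR T_bcl])
  also have "\<dots> = VI lam (rho/2) (\<lambda>z. inverse (z - lam) *\<^sub>C x + R z x)"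
  proof (rule VI_cong[OF r0(1)])
    fix z assume "z \<in> sphere lam (rho/2)"
    then have z: "z \<in> Om" using sphere_sub_Om[OF r0] by auto
    then have nz: "z - lam \<noteq> 0" by auto
    show "T (inverse (z - lam) *\<^sub>C R z x) = inverse (z - lam) *\<^sub>C x + R z x"
      using nz by (simp add: bcl_scaleC[OF T_bcl] T_R[OF z] scaleC_add_right)
  qed
  also have "\<dots> = VI lam (rho/2) (\<lambda>z. inverse (z - lam) *\<^sub>C x) + VI lam (rho/2) (\<lambda>z. R z x)"
    by (rule VI_add[OF r0(1) continuous_on_scaleC[OF inv_cont[OF r0(1)] continuous_on_const]
          continuous_on_subset[OF R_cont sphere_sub_Om[OF r0]]])
  also have "VI lam (rho/2) (\<lambda>z. inverse (z - lam) *\<^sub>C x) = x"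
    using VI_scalar_fun[OF r0(1) inv_cont[OF r0(1)] inv_int[OF r0(1)], of x] by simp
  also have "VI lam (rho/2) (\<lambda>z. R z x) = - P x"
    by (simp add: P_def G_def)
  finally show ?thesis by simp
qed

lemma ST: "S (T x) = x - P x"
proof -
  have "S (T x) = VI lam (rho/2) (\<lambda>z. T (inverse (z - lam) *\<^sub>C R z x))"
    unfolding S_def
  proof (rule VI_cong[OF r0(1)])
    fix z assume "z \<in> sphere lam (rho/2)"
    then have z: "z \<in> Om" using sphere_sub_Om[OF r0] by auto
    show "inverse (z - lam) *\<^sub>C R z (T x) = T (inverse (z - lam) *\<^sub>C R z x)"
      by (simp add: R_T_comm[OF z] bcl_scaleC[OF T_bcl])
  qed
  also have "\<dots> = T (S x)"
    unfolding S_def by (rule VI_linear[OF r0(1) cont_invR T_bcl, symmetric])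
  finally show ?thesis using TS by simp
qed

lemma S_bcl: "bounded_clinear S"
proof -
  obtain M where M: "M \<ge> 0" "\<And>z x. z \<in> sphere lam (rho/2) \<Longrightarrow> norm (R z x) \<le> M * norm x"
    using R_unif_bound[OF r0] by blast
  have add: "S (x + y) = S x + S y" for x y
  proof -
    have "S (x + y) = VI lam (rho/2) (\<lambda>z. inverse (z - lam) *\<^sub>C R z x + inverse (z - lam) *\<^sub>C R z y)"
      unfolding S_def
    proof (rule VI_cong[OF r0(1)])
      fix z assume "z \<in> sphere lam (rho/2)"
      then have z: "z \<in> Om" using sphere_sub_Om[OF r0] by auto
      show "inverse (z - lam) *\<^sub>C R z (x + y) = inverse (z - lam) *\<^sub>C R z x + inverse (z - lam) *\<^sub>C R z y"
        by (simp add: bcl_add[OF Rlin[OF z]] scaleC_add_right)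
    qed
    also have "\<dots> = S x + S y" unfolding S_def by (rule VI_add[OF r0(1) cont_invR cont_invR])
    finally show ?thesis .
  qed
  have scal: "S (a *\<^sub>C x) = a *\<^sub>C S x" for a x
  proof -
    have "S (a *\<^sub>C x) = VI lam (rho/2) (\<lambda>z. a *\<^sub>C (inverse (z - lam) *\<^sub>C R z x))"
      unfolding S_def
    proof (rule VI_cong[OF r0(1)])
      fix z assume "z \<in> sphere lam (rho/2)"
      then have z: "z \<in> Om" using sphere_sub_Om[OF r0] by auto
      show "inverse (z - lam) *\<^sub>C R z (a *\<^sub>C x) = a *\<^sub>C (inverse (z - lam) *\<^sub>C R z x)"
        by (simp add: bcl_scaleC[OF Rlin[OF z]] mult.commute)
    qed
    also have "\<dots> = a *\<^sub>C S x" unfolding S_def by (rule VI_scaleC[OF r0(1) cont_invR])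
    finally show ?thesis .
  qed
  have bnd: "norm (S x) \<le> norm x * M" for x
  proof -
    have "norm (S x) \<le> (rho/2) * (inverse (rho/2) * (M * norm x))"
      unfolding S_def
    proof (rule VI_bound[OF r0(1) cont_invR])
      fix z assume z: "z \<in> sphere lam (rho/2)"
      have "norm (inverse (z - lam) *\<^sub>C R z x) = inverse (rho/2) * norm (R z x)"
      proof -
        have "cmod (z - lam) = rho/2" using z by (simp add: dist_norm norm_minus_commute)
        then show ?thesis by (simp only: norm_scaleC norm_inverse)
      qed
      also have "\<dots> \<le> inverse (rho/2) * (M * norm x)"
        using M(2)[OF z, of x] rho by (intro mult_left_mono) auto
      finally show "norm (inverse (z - lam) *\<^sub>C R z x) \<le> inverse (rho/2) * (M * norm x)" .
    qed
    also have "\<dots> = norm x * M" using rho by (simp add: field_simps)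
    finally show ?thesis .
  qed
  show ?thesis unfolding bounded_clinear_def using add scal bnd by blast
qed

end

lemma logconv_seq:
  fixes a :: "nat \<Rightarrow> real"
  assumes nn: "\<And>k. a k \<ge> 0" and lc: "\<And>k. (a (Suc k))\<^sup>2 \<le> a (Suc (Suc k)) * a k"
  shows "a 1 ^ Suc k \<le> a 0 ^ k * a (Suc k)"
proof -
  have step: "a 1 * a j \<le> a 0 * a (Suc j)" for j
  proof (induction j)
    case 0 then show ?case by (simp add: mult.commute)
  next
    case (Suc j)
    show ?case
    proof (cases "a (Suc j) = 0")
      case True then show ?thesis using nn by simp
    next
      case False
      then have pos: "a (Suc j) > 0" using nn[of "Suc j"] by simp
      have "a 1 * (a (Suc j))\<^sup>2 \<le> a 1 * (a (Suc (Suc j)) * a j)"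
        using lc[of j] nn[of 1] by (rule mult_left_mono)
      also have "\<dots> = a (Suc (Suc j)) * (a 1 * a j)" by (simp add: algebra_simps)
      also have "\<dots> \<le> a (Suc (Suc j)) * (a 0 * a (Suc j))"
        using Suc.IH nn[of "Suc (Suc j)"] by (rule mult_left_mono)
      finally have "(a 1 * a (Suc j)) * a (Suc j) \<le> (a 0 * a (Suc (Suc j))) * a (Suc j)"
        by (simp add: power2_eq_square algebra_simps)
      then show ?thesis using pos by simp
    qed
  qed
  show ?thesis
  proof (induction k)
    case 0 then show ?case by simp
  next
    case (Suc k)
    have "a 1 ^ Suc (Suc k) = a 1 * a 1 ^ Suc k" by simp
    also have "\<dots> \<le> a 1 * (a 0 ^ k * a (Suc k))"
      using Suc.IH nn[of 1] by (rule mult_left_mono)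
    also have "\<dots> = a 0 ^ k * (a 1 * a (Suc k))" by (simp add: algebra_simps)
    also have "\<dots> \<le> a 0 ^ k * (a 0 * a (Suc (Suc k)))"
      using step[of "Suc k"] nn[of 0] by (intro mult_left_mono) auto
    finally show ?case by (simp add: algebra_simps)
  qed
qed

context pole_setting begin

abbreviation "N \<equiv> A ^^ n"
abbreviation "Ns \<equiv> As ^^ n"

lemma adj_pow: "cinner ((A ^^ k) x) y = cinner x ((As ^^ k) y)"
proof (induction k arbitrary: y)
  case 0 then show ?case by simp
next
  case (Suc k)
  have "cinner ((A ^^ Suc k) x) y = cinner ((A ^^ k) x) (As y)" by (simp add: adj)
  also have "\<dots> = cinner x ((As ^^ k) (As y))" by (rule Suc.IH)
  also have "(As ^^ k) (As y) = (As ^^ Suc k) y" by (simp add: funpow_swap1)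
  finally show ?case .
qed

lemma adj_pow_rev: "cinner ((As ^^ k) x) y = cinner x ((A ^^ k) y)"
  by (metis adj_pow cinner_commute)

lemma Ns_add: "Ns (x + y) = Ns x + Ns y"
  by (rule cinner_ext) (simp add: adj_pow[symmetric] cinner_add_right)

lemma Ns_scal: "Ns (c *\<^sub>C x) = c *\<^sub>C Ns x"
  by (rule cinner_ext) (simp add: adj_pow[symmetric] cinner_scaleC_right)

lemma Ns_diff: "Ns (x - y) = Ns x - Ns y"
proof -
  have "Ns (x - y) + Ns y = Ns x" using Ns_add[of "x - y" y] by simp
  then show ?thesis by (simp add: algebra_simps)
qed

lemma N_bcl: "bounded_clinear N" by (rule bcl_funpow[OF A])

lemma comm_pow: "(As ^^ k) (N x) = N ((As ^^ k) x)"
proof (induction k)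
  case 0 then show ?case by simp
next
  case (Suc k) then show ?case by (simp add: comm)
qed

definition Q :: "'a \<Rightarrow> 'a" where "Q x = N x - lam ^ n *\<^sub>C x"
definition Qs :: "'a \<Rightarrow> 'a" where "Qs x = Ns x - cnj (lam ^ n) *\<^sub>C x"

lemma Q_bcl: "bounded_clinear Q"
  unfolding Q_def[abs_def] by (rule bcl_diff_op[OF N_bcl bcl_scal])

lemma Q_adj2: "cinner (Qs x) y = cinner x (Q y)"
  by (simp add: Q_def Qs_def cinner_diff_left cinner_diff_right cinner_scaleC_left cinner_scaleC_right adj_pow_rev)

lemma QQs: "Q (Qs x) = Qs (Q x)"
  by (simp add: Q_def Qs_def bcl_diff[OF N_bcl] bcl_scaleC[OF N_bcl] Ns_diff Ns_scal comm_pow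
      scaleC_diff_right mult.commute algebra_simps)

lemma norm_sq_cinner: "norm (cinner v v) = (norm v)\<^sup>2"
  by (simp add: cinner_self_eq norm_power)

lemma norm_Qs: "norm (Qs u) = norm (Q u)"
proof -
  have "cinner (Qs u) (Qs u) = cinner u (Q (Qs u))" by (rule Q_adj2)
  also have "\<dots> = cinner u (Qs (Q u))" by (simp add: QQs)
  also have "\<dots> = cnj (cinner (Qs (Q u)) u)" by (rule cinner_commute)
  also have "cinner (Qs (Q u)) u = cinner (Q u) (Q u)" by (rule Q_adj2)
  finally have "norm (cinner (Qs u) (Qs u)) = norm (cinner (Q u) (Q u))" by simp
  then have "(norm (Qs u))\<^sup>2 = (norm (Q u))\<^sup>2" by (simp add: norm_sq_cinner)
  then show ?thesis by (simp add: power2_eq_iff_nonneg)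
qed

lemma Q_logconv: "(norm ((Q ^^ Suc k) x))\<^sup>2 \<le> norm ((Q ^^ Suc (Suc k)) x) * norm ((Q ^^ k) x)"
proof -
  define u where "u = (Q ^^ k) x"
  have "(norm (Q u))\<^sup>2 = norm (cinner (Q u) (Q u))" by (simp add: norm_sq_cinner)
  also have "cinner (Q u) (Q u) = cinner (Qs (Q u)) u" by (simp add: Q_adj2)
  also have "norm (cinner (Qs (Q u)) u) \<le> norm (Qs (Q u)) * norm u" by (rule Cauchy_Schwarz)
  also have "norm (Qs (Q u)) = norm (Q (Q u))" by (rule norm_Qs)
  finally show ?thesis by (simp add: u_def)
qed

end

context pole_setting begin

lemma pf_zpow_mult: "pf f \<Longrightarrow> pf (\<lambda>z. z ^ j * f z)"
  by (rule pf_mult[OF pf_pow[OF pf_id]])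

lemma A_pow_G:
  assumes r: "0 < r" "r < rho" and f: "pf f"
  shows "(A ^^ j) (G r f w) = G r (\<lambda>z. z ^ j * f z) w"
proof (induction j)
  case 0 then show ?case by simp
next
  case (Suc j)
  have "(A ^^ Suc j) (G r f w) = A (G r (\<lambda>z. z ^ j * f z) w)" using Suc by simp
  also have "\<dots> = G r (\<lambda>z. z * (z ^ j * f z)) w" by (rule G_A[OF r pf_zpow_mult[OF f]])
  also have "(\<lambda>z. z * (z ^ j * f z)) = (\<lambda>z. z ^ Suc j * f z)" by (simp add: fun_eq_iff)
  finally show ?case .
qed

lemma Q_G:
  assumes r: "0 < r" "r < rho" and f: "pf f"
  shows "Q (G r f w) = G r (\<lambda>z. (z ^ n - lam ^ n) * f z) w"
proof -
  have fc: "continuous_on (sphere lam r) f" by (rule pf_cont[OF f])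
  have c1: "continuous_on (sphere lam r) (\<lambda>z. z ^ n * f z)" by (rule pf_cont[OF pf_zpow_mult[OF f]])
  have "(\<lambda>z. (z ^ n - lam ^ n) * f z) = (\<lambda>z. z ^ n * f z + (- (lam ^ n)) * f z)"
    by (simp add: fun_eq_iff algebra_simps)
  then have "G r (\<lambda>z. (z ^ n - lam ^ n) * f z) w = G r (\<lambda>z. z ^ n * f z) w + (- (lam ^ n)) *\<^sub>C G r f w"
    using G_add_fun[OF r c1, of "\<lambda>z. (- (lam ^ n)) * f z" w] G_scal_fun[OF r fc, of "- (lam ^ n)" w]
    by (simp add: continuous_intros fc)
  then show ?thesis by (simp add: Q_def A_pow_G[OF r f] scaleC_minus_left)
qed

lemma pf_Qpoly: "pf (\<lambda>z. (z ^ n - lam ^ n) ^ k)"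
  by (intro pf_pow pf_diff pf_id pf_const)

lemma Qpow_P:
  assumes r: "0 < r" "r < rho"
  shows "(Q ^^ k) (P w) = G r (\<lambda>z. (z ^ n - lam ^ n) ^ k) w"
proof (induction k)
  case 0
  have "P w = G r (\<lambda>z. 1) w" unfolding P_def by (rule G_indep[OF r0 r pf_const])
  then show ?case by simp
next
  case (Suc k)
  have "(Q ^^ Suc k) (P w) = Q (G r (\<lambda>z. (z ^ n - lam ^ n) ^ k) w)" using Suc by simp
  also have "\<dots> = G r (\<lambda>z. (z ^ n - lam ^ n) * (z ^ n - lam ^ n) ^ k) w" by (rule Q_G[OF r pf_Qpoly])
  finally show ?case by simp
qed

lemma poly_bound: "\<exists>C\<ge>0. \<forall>z. cmod (z - lam) \<le> 1 \<longrightarrow> cmod (z ^ n - lam ^ n) \<le> C * cmod (z - lam)"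
proof -
  obtain m where m: "n = Suc m" using npos by (cases n) auto
  define C where "C = (\<Sum>p<Suc m. (cmod lam + 1) ^ p * (cmod lam + 1) ^ (m - p))"
  have C0: "C \<ge> 0" unfolding C_def by (intro sum_nonneg) auto
  have "cmod (z ^ n - lam ^ n) \<le> C * cmod (z - lam)" if z: "cmod (z - lam) \<le> 1" for z
  proof -
    have zb: "cmod z \<le> cmod lam + 1"
      using norm_triangle_ineq2[of z lam] z by simp
    have "cmod (\<Sum>p<Suc m. z ^ p * lam ^ (m - p)) \<le> (\<Sum>p<Suc m. cmod (z ^ p * lam ^ (m - p)))"
      by (rule norm_sum)
    also have "\<dots> \<le> C" unfolding C_def
    proof (rule sum_mono)
      fix p
      show "cmod (z ^ p * lam ^ (m - p)) \<le> (cmod lam + 1) ^ p * (cmod lam + 1) ^ (m - p)"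
        unfolding norm_mult norm_power
        by (intro mult_mono power_mono zb) auto
    qed
    finally have sb: "cmod (\<Sum>p<Suc m. z ^ p * lam ^ (m - p)) \<le> C" .
    have "cmod (z ^ n - lam ^ n) = cmod (z - lam) * cmod (\<Sum>p<Suc m. z ^ p * lam ^ (m - p))"
      unfolding m diff_power_eq_sum norm_mult ..
    also have "\<dots> \<le> cmod (z - lam) * C" by (rule mult_left_mono[OF sb]) simp
    finally show ?thesis by (simp add: mult.commute)
  qed
  then show ?thesis using C0 by blast
qed

lemma QP_zero: "Q (P w) = 0"
proof (rule ccontr)
  define x where "x = P w"
  define a where "a = (\<lambda>k. norm ((Q ^^ k) x))"
  assume "Q (P w) \<noteq> 0"
  then have a1: "a 1 > 0" by (simp add: a_def x_def)
  have a0: "a 0 > 0"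
  proof -
    have "x \<noteq> 0" using a1 bcl_zero[OF Q_bcl] by (auto simp: a_def)
    then show ?thesis by (simp add: a_def)
  qed
  have ann: "a k \<ge> 0" for k by (simp add: a_def)
  have lc: "(a (Suc k))\<^sup>2 \<le> a (Suc (Suc k)) * a k" for k unfolding a_def by (rule Q_logconv)
  obtain C where C: "C \<ge> 0" "\<And>z. cmod (z - lam) \<le> 1 \<Longrightarrow> cmod (z ^ n - lam ^ n) \<le> C * cmod (z - lam)"
    using poly_bound by blast
  define r where "r = min (rho/2) (min 1 (a 1 / (2 * (a 0 * (C + 1)))))"
  have rpos: "0 < r" using rho a1 a0 C by (simp add: r_def)
  have rr: "r < rho" "r \<le> 1" using rho by (auto simp: r_def)
  have rC: "a 0 * C * r \<le> a 1 / 2"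
  proof -
    have "r \<le> a 1 / (2 * (a 0 * (C + 1)))" by (simp add: r_def)
    then have "r * (2 * (a 0 * (C + 1))) \<le> a 1" using a0 C by (simp add: pos_le_divide_eq)
    moreover have "a 0 * C * r \<le> a 0 * (C + 1) * r" using a0 rpos by (intro mult_right_mono mult_left_mono) auto
    ultimately show ?thesis by (simp add: algebra_simps)
  qed
  obtain M where M: "M \<ge> 0" "\<And>z x. z \<in> sphere lam r \<Longrightarrow> norm (R z x) \<le> M * norm x"
    using R_unif_bound[OF rpos rr(1)] by blast
  define K where "K = r * (M * norm w)"
  have K0: "K \<ge> 0" using rpos M by (simp add: K_def)
  have abound: "a k \<le> (C * r) ^ k * K" for k
  proof -
    have "a k = norm (G r (\<lambda>z. (z ^ n - lam ^ n) ^ k) w)" by (simp add: a_def x_def Qpow_P[OF rpos rr(1)])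
    also have "\<dots> \<le> r * ((C * r) ^ k * (M * norm w))"
    proof (rule G_bound[OF rpos rr(1) pf_cont[OF pf_Qpoly] _ M])
      fix z assume z: "z \<in> sphere lam r"
      then have dz: "cmod (z - lam) = r" by (simp add: dist_norm norm_minus_commute)
      show "cmod ((z ^ n - lam ^ n) ^ k) \<le> (C * r) ^ k"
        unfolding norm_power by (rule power_mono) (use C(2)[of z] dz rr in auto)
    qed
    finally show ?thesis by (simp add: K_def algebra_simps)
  qed
  have main: "a 0 * 2 ^ Suc k \<le> K" for k
  proof -
    have "a 1 ^ Suc k \<le> a 0 ^ k * a (Suc k)" by (rule logconv_seq[where a=a, OF ann lc])
    also have "\<dots> \<le> a 0 ^ k * ((C * r) ^ Suc k * K)"
      using abound[of "Suc k"] a0 by (intro mult_left_mono) auto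
    finally have "a 0 * a 1 ^ Suc k \<le> (a 0 * C * r) ^ Suc k * K"
      using a0 by (simp add: power_mult_distrib algebra_simps)
    also have "\<dots> \<le> (a 1 / 2) ^ Suc k * K"
      using rC K0 a0 C rpos by (intro mult_right_mono power_mono) auto
    finally have "a 0 * a 1 ^ Suc k \<le> (a 1 / 2) ^ Suc k * K" .
    then have "(a 0 * 2 ^ Suc k) * (a 1 / 2) ^ Suc k \<le> K * (a 1 / 2) ^ Suc k"
      by (simp add: power_divide algebra_simps)
    then show ?thesis using a1 by simp
  qed
  obtain k where k: "K / a 0 < 2 ^ k" using real_arch_pow[of 2 "K / a 0"] by auto
  have "K < a 0 * 2 ^ k" using k a0 by (simp add: divide_less_eq mult.commute)
  also have "\<dots> \<le> a 0 * 2 ^ Suc k" using a0 by simp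
  also have "\<dots> \<le> K" by (rule main)
  finally show False by simp
qed

end

context pole_setting begin

lemma Z_mult:
  assumes g: "pf g"
  shows "pf f \<Longrightarrow> (\<forall>w. G (rho/2) f w = 0) \<Longrightarrow> (\<forall>w. G (rho/2) (\<lambda>z. g z * f z) w = 0)"
  using g
proof (induction arbitrary: f rule: pf.induct)
  case (pf_const c)
  then show ?case using G_scal_fun[OF r0 pf_cont[OF pf_const(1)], of c] by simp
next
  case pf_id
  then show ?case using G_A[OF r0 pf_id(1)] bcl_zero[OF A] by metis
next
  case (pf_add g1 g2)
  have "(\<lambda>z. (g1 z + g2 z) * f z) = (\<lambda>z. g1 z * f z + g2 z * f z)" by (simp add: fun_eq_iff algebra_simps)
  moreover have "G (rho/2) (\<lambda>z. g1 z * f z + g2 z * f z) w = G (rho/2) (\<lambda>z. g1 z * f z) w + G (rho/2) (\<lambda>z. g2 z * f z) w" for w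
    by (rule G_add_fun[OF r0 pf_cont[OF pf_mult[OF pf_add.hyps(1) pf_add.prems(1)]] pf_cont[OF pf_mult[OF pf_add.hyps(2) pf_add.prems(1)]]])
  ultimately show ?case using pf_add.IH pf_add.prems by simp
next
  case (pf_mult g1 g2)
  have "\<forall>w. G (rho/2) (\<lambda>z. g2 z * f z) w = 0" using pf_mult.IH(2) pf_mult.prems by blast
  then have "\<forall>w. G (rho/2) (\<lambda>z. g1 z * (g2 z * f z)) w = 0"
    using pf_mult.IH(1)[of "\<lambda>z. g2 z * f z"] pf_mult.hyps(2) pf_mult.prems(1) pf.pf_mult by blast
  moreover have "(\<lambda>z. g1 z * (g2 z * f z)) = (\<lambda>z. g1 z * g2 z * f z)" by (simp add: fun_eq_iff algebra_simps)
  ultimately show ?case by simp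
qed

lemma pf_zlam: "pf (\<lambda>z. z - lam)" by (intro pf_diff pf_id pf_const)

lemma Tpow_P: "(T ^^ k) (P w) = G (rho/2) (\<lambda>z. (z - lam) ^ k) w"
proof (induction k)
  case 0 then show ?case by (simp add: P_def)
next
  case (Suc k)
  have "(T ^^ Suc k) (P w) = T (G (rho/2) (\<lambda>z. (z - lam) ^ k) w)" using Suc by simp
  also have "\<dots> = G (rho/2) (\<lambda>z. (z - lam) * (z - lam) ^ k) w" by (rule G_T[OF r0 pf_pow[OF pf_zlam]])
  finally show ?case by simp
qed

lemma Zn: "\<forall>w. G (rho/2) (\<lambda>z. z ^ n - lam ^ n) w = 0"
proof
  fix w
  have "Q (P w) = G (rho/2) (\<lambda>z. (z ^ n - lam ^ n) * 1) w" unfolding P_def by (rule Q_G[OF r0 pf_const])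
  then show "G (rho/2) (\<lambda>z. z ^ n - lam ^ n) w = 0" using QP_zero by simp
qed

lemma Z1:
  assumes lam0: "lam \<noteq> 0"
  shows "G (rho/2) (\<lambda>z. z - lam) w = 0"
proof -
  obtain m where m: "n = Suc m" using npos by (cases n) auto
  define q where "q = (\<lambda>z. \<Sum>p<Suc m. z ^ p * lam ^ (m - p))"
  have qf: "z ^ n - lam ^ n = (z - lam) * q z" for z unfolding m q_def by (rule diff_power_eq_sum)
  have pq: "pf q" unfolding q_def by (intro pf_sum pf_mult pf_pow pf_id pf_const)
  define c0 where "c0 = q lam"
  have c0: "c0 = of_nat n * lam ^ m"
  proof -
    have "c0 = (\<Sum>p<Suc m. lam ^ m)" unfolding c0_def q_def
      by (intro sum.cong refl) (simp add: power_add[symmetric])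
    then show ?thesis by (simp add: m)
  qed
  have c0nz: "c0 \<noteq> 0" using lam0 npos by (simp add: c0)
  define v where "v = (\<lambda>z. 1 - (1 / c0) * q z)"
  have pv: "pf v" unfolding v_def by (intro pf_diff pf_const pf_cmult pq)
  have v0: "v lam = 0" using c0nz by (simp add: v_def c0_def[symmetric])
  have "continuous (at lam) v" using pf_cont[OF pv, of UNIV] by (simp add: continuous_on_eq_continuous_at)
  then obtain d where d: "d > 0" "\<And>z. dist z lam < d \<Longrightarrow> dist (v z) (v lam) < 1/2"
    unfolding continuous_at_eps_delta by (metis divide_pos_pos zero_less_numeral zero_less_one)
  define r where "r = min (rho/2) (d/2)"
  have rpos: "0 < r" "r < rho" using rho d by (auto simp: r_def)
  have vb: "cmod (v z) \<le> 1/2" if "z \<in> sphere lam r" for z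
  proof -
    have "dist z lam < d" using that d rpos by (simp add: r_def dist_commute)
    then show ?thesis using d(2)[of z] v0 by (simp add: dist_norm)
  qed
  obtain M where M: "M \<ge> 0" "\<And>z x. z \<in> sphere lam r \<Longrightarrow> norm (R z x) \<le> M * norm x"
    using R_unif_bound[OF rpos] by blast
  define K where "K = r * (r * (M * norm w))"
  have K0: "K \<ge> 0" using rpos M by (simp add: K_def)
  have bound: "norm (G (rho/2) (\<lambda>z. z - lam) w) \<le> K * (1/2) ^ k" for k
  proof -
    define pm where "pm = (\<lambda>z. (1 / c0) * (\<Sum>i<k. v z ^ i))"
    have ppm: "pf pm" unfolding pm_def by (intro pf_cmult pf_sum pf_pow pv)
    have ident: "pm z * (z ^ n - lam ^ n) = (z - lam) * (1 - v z ^ k)" for z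
    proof -
      have "q z / c0 = 1 - v z" using c0nz by (simp add: v_def)
      have "pm z * (z ^ n - lam ^ n) = (z - lam) * ((q z / c0) * (\<Sum>i<k. v z ^ i))"
        unfolding pm_def qf by (simp add: divide_inverse mult_ac)
      also have "q z / c0 = 1 - v z" using c0nz by (simp add: v_def)
      also have "(1 - v z) * (\<Sum>i<k. v z ^ i) = 1 - v z ^ k" by (rule one_diff_power_eq[symmetric])
      finally show ?thesis .
    qed
    have z1: "\<forall>w. G (rho/2) (\<lambda>z. (z - lam) * (1 - v z ^ k)) w = 0"
      using Z_mult[OF ppm, of "\<lambda>z. z ^ n - lam ^ n"] Zn ident
      by (simp add: pf_diff pf_pow pf_id pf_const)
    have pvk: "pf (\<lambda>z. (z - lam) * v z ^ k)" by (intro pf_mult pf_zlam pf_pow pv)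
    have p1: "pf (\<lambda>z. (z - lam) * (1 - v z ^ k))" by (intro pf_mult pf_zlam pf_diff pf_const pf_pow pv)
    have feq: "(\<lambda>z. z - lam) = (\<lambda>z. (z - lam) * (1 - v z ^ k) + (z - lam) * v z ^ k)"
      by (simp add: fun_eq_iff algebra_simps)
    have "G (rho/2) (\<lambda>z. z - lam) w = G (rho/2) (\<lambda>z. (z - lam) * (1 - v z ^ k)) w + G (rho/2) (\<lambda>z. (z - lam) * v z ^ k) w"
      by (subst feq) (rule G_add_fun[OF r0 pf_cont[OF p1] pf_cont[OF pvk]])
    also have "\<dots> = G r (\<lambda>z. (z - lam) * v z ^ k) w" using z1 G_indep[OF r0 rpos pvk] by simp
    finally have eq: "G (rho/2) (\<lambda>z. z - lam) w = G r (\<lambda>z. (z - lam) * v z ^ k) w" .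
    have "norm (G r (\<lambda>z. (z - lam) * v z ^ k) w) \<le> r * ((r * (1/2) ^ k) * (M * norm w))"
    proof (rule G_bound[OF rpos pf_cont[OF pvk] _ M])
      fix z assume z: "z \<in> sphere lam r"
      then have dz: "cmod (z - lam) = r" by (simp add: dist_norm norm_minus_commute)
      have "cmod (v z) ^ k \<le> (1/2) ^ k" by (rule power_mono[OF vb[OF z]]) simp
      then show "cmod ((z - lam) * v z ^ k) \<le> r * (1/2) ^ k"
        unfolding norm_mult norm_power dz using rpos by (simp add: mult_left_mono)
    qed
    then show ?thesis using eq by (simp add: K_def algebra_simps)
  qed
  show ?thesis
  proof (rule ccontr)
    assume ne: "G (rho/2) (\<lambda>z. z - lam) w \<noteq> 0"
    define e where "e = norm (G (rho/2) (\<lambda>z. z - lam) w)"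
    have e: "e > 0" using ne by (simp add: e_def)
    obtain k where k: "(1/2::real) ^ k < e / (K + 1)"
      using real_arch_pow_inv[of "e / (K + 1)" "1/2"] e K0 by auto
    have "K * (1/2) ^ k \<le> (K + 1) * (1/2) ^ k" by (intro mult_right_mono) auto
    also have "\<dots> < (K + 1) * (e / (K + 1))" using k K0 by (intro mult_strict_left_mono) auto
    also have "\<dots> = e" using K0 by simp
    finally show False using bound[of k] by (simp add: e_def)
  qed
qed

lemma TnP: "(T ^^ n) (P w) = 0"
proof (cases "lam = 0")
  case True
  have "(\<lambda>z. (z - lam) ^ n) = (\<lambda>z. z ^ n - lam ^ n)" using True npos by (simp add: fun_eq_iff)
  then show ?thesis using Zn by (simp add: Tpow_P)
next
  case False
  obtain m where m: "n = Suc m" using npos by (cases n) auto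
  have "\<forall>w. G (rho/2) (\<lambda>z. (z - lam) ^ m * (z - lam)) w = 0"
    using Z_mult[OF pf_pow[OF pf_zlam] pf_zlam] Z1[OF False] by blast
  moreover have "(\<lambda>z. (z - lam) ^ m * (z - lam)) = (\<lambda>z. (z - lam) ^ n)" by (simp add: m fun_eq_iff mult.commute)
  ultimately show ?thesis by (simp add: Tpow_P)
qed

end

lemma pole_from_stab:
  fixes T :: "'a::complex_inner_space \<Rightarrow> 'a"
  assumes lin: "\<And>k x y. (T ^^ k) (x - y) = (T ^^ k) x - (T ^^ k) y"
    and kst: "{x. (T ^^ m) x = 0} = {x. (T ^^ Suc m) x = 0}"
    and rst: "range (T ^^ m) = range (T ^^ Suc m)"
    and nz: "\<exists>x. x \<noteq> 0 \<and> T x = 0"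
  shows "0 < ascent T \<and> ascent T = descent T \<and> ascent T < \<infinity>"
proof -
  define K where "K = (\<lambda>p. {x. (T ^^ p) x = 0})"
  define Rg where "Rg = (\<lambda>p. range (T ^^ p))"
  have zero: "(T ^^ k) 0 = 0" for k using lin[of k 0 0] by simp
  have comp: "(T ^^ (p + j)) x = (T ^^ p) ((T ^^ j) x)" for p j x by (simp add: funpow_add)
  have Kmono: "K p \<subseteq> K (p + j)" for p j
    unfolding K_def by (auto simp: comp[of j p, simplified add.commute] add.commute zero)
  have Kstab: "K p = K (Suc p) \<Longrightarrow> K (p + j) = K p" for p j
  proof (induction j)
    case 0 then show ?case by simp
  next
    case (Suc j)
    have "K (p + Suc j) \<subseteq> K (p + j)"
    proof
      fix x assume x: "x \<in> K (p + Suc j)"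
      have "(T ^^ Suc p) ((T ^^ j) x) = 0" using x comp[of "Suc p" j x] by (simp add: K_def)
      then have "(T ^^ j) x \<in> K p" using Suc.prems by (simp add: K_def)
      then show "x \<in> K (p + j)" by (simp add: K_def comp)
    qed
    moreover have "K (p + j) \<subseteq> K (p + Suc j)" using Kmono[of "p + j" 1] by simp
    ultimately show ?case using Suc by simp
  qed
  have Rmono: "Rg (p + j) \<subseteq> Rg p" for p j unfolding Rg_def by (auto simp: comp)
  have Rstab: "Rg p = Rg (Suc p) \<Longrightarrow> Rg (p + j) = Rg p" for p j
  proof (induction j)
    case 0 then show ?case by simp
  next
    case (Suc j)
    have "Rg p \<subseteq> Rg (p + Suc j)"
    proof
      fix y assume "y \<in> Rg p"
      then have "y \<in> Rg (p + j)" using Suc by simp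
      then obtain x where x: "y = (T ^^ j) ((T ^^ p) x)" by (auto simp: Rg_def comp[of j p, simplified add.commute] add.commute)
      have "(T ^^ p) x \<in> Rg (Suc p)" using Suc.prems by (auto simp: Rg_def)
      then obtain x' where "(T ^^ p) x = (T ^^ Suc p) x'" by (auto simp: Rg_def)
      then have "y = (T ^^ j) ((T ^^ Suc p) x')" using x by simp
      then have "y = (T ^^ (j + Suc p)) x'" by (simp only: comp)
      then show "y \<in> Rg (p + Suc j)" by (simp add: Rg_def add.commute)
    qed
    then show ?case using Rmono[of p "Suc j"] by auto
  qed
  have exK: "\<exists>p. K p = K (Suc p)" using kst by (auto simp: K_def)
  have exR: "\<exists>p. Rg p = Rg (Suc p)" using rst by (auto simp: Rg_def)
  define a where "a = (LEAST p. K p = K (Suc p))"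
  define d where "d = (LEAST p. Rg p = Rg (Suc p))"
  have asc: "ascent T = enat a" unfolding ascent_def a_def K_def using exK by (simp add: K_def)
  have dsc: "descent T = enat d" unfolding descent_def d_def Rg_def using exR by (simp add: Rg_def)
  have Ka: "K a = K (Suc a)" unfolding a_def by (rule LeastI_ex[OF exK])
  have Rd: "Rg d = Rg (Suc d)" unfolding d_def by (rule LeastI_ex[OF exR])
  have ad: "a \<le> d"
  proof -
    have "K (Suc d) \<subseteq> K d"
    proof
      fix x assume x: "x \<in> K (Suc d)"
      have "(T ^^ d) x \<in> Rg (d + a)" using Rstab[OF Rd, of a] by (auto simp: Rg_def)
      then obtain z where z: "(T ^^ d) x = (T ^^ (d + a)) z" by (auto simp: Rg_def)
      have "(T ^^ Suc d) x = T ((T ^^ d) x)" by simp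
      then have "T ((T ^^ (d + a)) z) = 0" using x z by (simp add: K_def)
      then have "z \<in> K (a + Suc d)" by (simp add: K_def add.commute)
      then have "z \<in> K a" using Kstab[OF Ka, of "Suc d"] by simp
      then have "(T ^^ (d + a)) z = 0" by (simp add: K_def comp zero)
      then show "x \<in> K d" using z by (simp add: K_def)
    qed
    then have "K d = K (Suc d)" using Kmono[of d 1] by auto
    then show ?thesis unfolding a_def by (rule Least_le)
  qed
  have da: "d \<le> a"
  proof (cases "d = 0")
    case True then show ?thesis by simp
  next
    case False
    have "Rg a \<subseteq> Rg (Suc a)"
    proof
      fix y assume "y \<in> Rg a"
      then obtain x where y: "y = (T ^^ a) x" by (auto simp: Rg_def)
      have "(T ^^ d) x \<in> Rg (d + d)" using Rstab[OF Rd, of d] by (auto simp: Rg_def)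
      then obtain z where z: "(T ^^ d) x = (T ^^ (d + d)) z" by (auto simp: Rg_def)
      have "(T ^^ d) (x - (T ^^ d) z) = 0" using z by (simp add: lin comp)
      then have "x - (T ^^ d) z \<in> K (a + (d - a))" using ad by (simp add: K_def)
      then have "x - (T ^^ d) z \<in> K a" using Kstab[OF Ka, of "d - a"] by simp
      then have "(T ^^ a) x = (T ^^ a) ((T ^^ d) z)" by (simp add: K_def lin)
      also have "\<dots> = (T ^^ (a + d)) z" by (rule comp[symmetric])
      also have "a + d = Suc a + (d - 1)" using False by simp
      also have "(T ^^ (Suc a + (d - 1))) z = (T ^^ Suc a) ((T ^^ (d - 1)) z)" by (rule comp)
      finally show "y \<in> Rg (Suc a)" using y by (simp add: Rg_def)
    qed
    then have "Rg a = Rg (Suc a)" using Rmono[of a 1] by auto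
    then show ?thesis unfolding d_def by (rule Least_le)
  qed
  have a0: "a \<noteq> 0"
  proof
    assume "a = 0"
    then have "K 0 = K 1" using Ka by simp
    obtain x where x: "x \<noteq> 0" "T x = 0" using nz by blast
    have "x \<in> K 1" using x(2) by (simp add: K_def)
    then have "x \<in> K 0" using \<open>K 0 = K 1\<close> by simp
    then show False using x(1) by (simp add: K_def)
  qed
  have "a = d" using ad da by simp
  then show ?thesis using asc dsc a0 by (simp add: zero_enat_def)
qed

context pole_setting begin

lemma S_Tpow: "S ((T ^^ k) x) = (T ^^ k) (S x)"
proof (induction k)
  case 0 then show ?case by simp
next
  case (Suc k)
  have "S ((T ^^ Suc k) x) = S (T ((T ^^ k) x))" by simp
  also have "\<dots> = T (S ((T ^^ k) x))" using ST TS by simp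
  finally show ?case using Suc by simp
qed

lemma final:
  assumes iso: "lam isolated_in spectrum A"
  shows "Defs.is_pole A lam"
proof -
  have sh: "shiftop A lam = T" by (simp add: fun_eq_iff shiftop_def T_def)
  have Tn: "bounded_clinear (T ^^ k)" for k by (rule bcl_funpow[OF T_bcl])
  have decomp: "x = P x + S (T x)" for x using ST[of x] by simp
  have decomp2: "x = P x + T (S x)" for x using TS[of x] by simp
  have k1: "(T ^^ Suc n) x = 0" if "(T ^^ n) x = 0" for x
    using that by (simp add: bcl_zero[OF T_bcl])
  have k2: "(T ^^ n) x = 0" if h: "(T ^^ Suc n) x = 0" for x
  proof -
    have "(T ^^ n) x = (T ^^ n) (P x) + (T ^^ n) (S (T x))"
      by (subst decomp) (rule bcl_add[OF Tn])
    also have "(T ^^ n) (S (T x)) = S ((T ^^ n) (T x))" by (rule S_Tpow[symmetric])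
    also have "(T ^^ n) (T x) = (T ^^ Suc n) x" by (simp only: funpow_Suc_right o_apply)
    finally have eq: "(T ^^ n) x = (T ^^ n) (P x) + S ((T ^^ Suc n) x)" .
    have z1: "(T ^^ n) (P x) = 0" by (rule TnP)
    have z2: "S ((T ^^ Suc n) x) = 0" by (simp only: h bcl_zero[OF S_bcl])
    show "(T ^^ n) x = 0" using eq by (simp only: z1 z2 add_0_right)
  qed
  have kst: "{x. (T ^^ n) x = 0} = {x. (T ^^ Suc n) x = 0}"
    by (rule set_eqI, unfold mem_Collect_eq, rule iffI, erule k1, erule k2)
  have rst: "range (T ^^ n) = range (T ^^ Suc n)"
  proof
    show "range (T ^^ Suc n) \<subseteq> range (T ^^ n)"
    proof
      fix y assume "y \<in> range (T ^^ Suc n)"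
      then obtain x where y: "y = (T ^^ Suc n) x" by auto
      have "(T ^^ Suc n) x = (T ^^ n) (T x)" by (simp only: funpow_Suc_right o_apply)
      then show "y \<in> range (T ^^ n)" using y by auto
    qed
    show "range (T ^^ n) \<subseteq> range (T ^^ Suc n)"
    proof
      fix y assume "y \<in> range (T ^^ n)"
      then obtain x where y: "y = (T ^^ n) x" by auto
      have "(T ^^ n) x = (T ^^ n) (P x) + (T ^^ n) (T (S x))"
        by (subst decomp2) (rule bcl_add[OF Tn])
      also have "(T ^^ n) (T (S x)) = (T ^^ Suc n) (S x)" by (simp only: funpow_Suc_right o_apply)
      also have "(T ^^ n) (P x) = 0" by (rule TnP)
      finally show "y \<in> range (T ^^ Suc n)" using y by auto
    qed
  qed
  have nz: "\<exists>x. x \<noteq> 0 \<and> T x = 0"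
  proof (rule ccontr)
    assume "\<not> (\<exists>x. x \<noteq> 0 \<and> T x = 0)"
    then have inj: "T x = 0 \<Longrightarrow> x = 0" for x by blast
    have injk: "(T ^^ k) x = 0 \<Longrightarrow> x = 0" for k x
    proof (induction k arbitrary: x)
      case 0 then show ?case by simp
    next
      case (Suc k)
      then have "T ((T ^^ k) x) = 0" by simp
      then show ?case using Suc.IH inj by blast
    qed
    have P0: "P x = 0" for x using injk[OF TnP] .
    have "\<exists>B. bounded_clinear B \<and> (\<forall>x. B (shiftop A lam x) = x) \<and> (\<forall>x. shiftop A lam (B x) = x)"
      using S_bcl ST TS P0 by (intro exI[of _ S]) (simp add: sh)
    then have "lam \<notin> spectrum A" by (simp add: spectrum_def)
    then show False using iso by (simp add: isolated_in_def)
  qed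
  have "0 < ascent T \<and> ascent T = descent T \<and> ascent T < \<infinity>"
    by (rule pole_from_stab[OF bcl_diff[OF Tn] kst rst nz])
  then show ?thesis unfolding Defs.is_pole_def sh using iso by blast
qed

end

theorem theorem3p1:
  fixes A Astar :: "'a::complex_hilbert_space \<Rightarrow> 'a" and n :: nat
  assumes "infinite_dimensional TYPE('a)"
    and "n > 1"
    and "bounded_clinear A"
    and "\<forall>x y. cinner (A x) y = cinner x (Astar y)"
    and "Astar \<circ> (A ^^ n) = (A ^^ n) \<circ> Astar"
  shows "polaroid A"
  unfolding polaroid_def
proof (intro allI impI)
  fix mu assume iso: "mu isolated_in spectrum A"
  then obtain U where U: "open U" "U \<inter> spectrum A = {mu}" by (auto simp: isolated_in_def)
  have muU: "mu \<in> U" using U(2) by auto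
  obtain rho where rho: "rho > 0" "ball mu rho \<subseteq> U" using U(1) muU openE by blast
  have ex: "\<exists>B. bounded_clinear B \<and> (\<forall>x. B (shiftop A z x) = x) \<and> (\<forall>x. shiftop A z (B x) = x)"
    if z: "z \<in> ball mu rho - {mu}" for z
  proof -
    have "z \<notin> spectrum A" using z rho U(2) by auto
    then show ?thesis by (simp add: spectrum_def)
  qed
  define R where "R = (\<lambda>z. SOME B. bounded_clinear B \<and> (\<forall>x. B (shiftop A z x) = x) \<and> (\<forall>x. shiftop A z (B x) = x))"
  have RR: "bounded_clinear (R z) \<and> (\<forall>x. R z (shiftop A z x) = x) \<and> (\<forall>x. shiftop A z (R z x) = x)"
    if z: "z \<in> ball mu rho - {mu}" for z
    unfolding R_def by (rule someI_ex[OF ex[OF z]])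
  interpret ps: pole_setting A Astar n mu rho R
  proof unfold_locales
    show "bounded_clinear A" by (rule assms(3))
    show "cinner (A x) y = cinner x (Astar y)" for x y using assms(4) by blast
    show "Astar ((A ^^ n) x) = (A ^^ n) (Astar x)" for x using fun_cong[OF assms(5), of x] by simp
    show "0 < n" using assms(2) by simp
    show "0 < rho" by (rule rho(1))
    show "bounded_clinear (R z)" if "z \<in> ball mu rho - {mu}" for z using RR[OF that] by blast
    show "R z (A x - z *\<^sub>C x) = x" if "z \<in> ball mu rho - {mu}" for z x
      using RR[OF that] by (simp add: shiftop_def)
    show "A (R z x) - z *\<^sub>C R z x = x" if "z \<in> ball mu rho - {mu}" for z x
      using RR[OF that] by (simp add: shiftop_def)
  qed
  show "Defs.is_pole A mu" by (rule ps.final[OF iso])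
qed

end
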